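(* Let $w$ be analytic on the open unit disk $D=\{|z|<1\}$ and suppose $w$ has a borderline hard singularity at a point $z_1$ with $|z_1|=1$. Then this singularity is integrable: the integral of $w$ along curves in $D$ reaching $z_1$ exists and is a finite complex number.
   Context: An inner analytic function is one analytic on the open unit disk centered at the origin. Its angular primitive is $w^{-1\cdot}(z)=-i\int_0^z\frac{w(z')-w(0)}{z'}dz'$ (integral along any curve in the disk, integrand extended at $0$ by $w'(0)$). A singular point of $w$ on the unit circle is a point where $w$ fails to be analytic; a singularity at $z_1$ is soft if $\lim_{z\to z_1}w(z)$ (from within the disk) exists and is finite, and hard otherwise. A hard singularity of $w$ at $z_1$ is borderline hard (degree of hardness zero) if a single angular integration produces a function $w^{-1\cdot}$ which has a soft singularity at $z_1$. *)

theory Defs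
  imports "HOL-Complex_Analysis.Complex_Analysis"
begin

definition angular_primitive :: "(complex \<Rightarrow> complex) \<Rightarrow> complex \<Rightarrow> complex" where
  "angular_primitive w z =
     - \<i> * contour_integral (linepath 0 z)
              (\<lambda>z'. if z' = 0 then deriv w 0 else (w z' - w 0) / z')"

definition regular_point :: "(complex \<Rightarrow> complex) \<Rightarrow> complex \<Rightarrow> bool" where
  "regular_point w z1 \<longleftrightarrow> (\<exists>g r. r > 0 \<and> g holomorphic_on ball z1 r \<and>
       (\<forall>z \<in> ball z1 r \<inter> ball 0 1. g z = w z))"

definition singular_point :: "(complex \<Rightarrow> complex) \<Rightarrow> complex \<Rightarrow> bool" where
  "singular_point w z1 \<longleftrightarrow> \<not> regular_point w z1"

definition soft_singularity :: "(complex \<Rightarrow> complex) \<Rightarrow> complex \<Rightarrow> bool" where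
  "soft_singularity w z1 \<longleftrightarrow> singular_point w z1 \<and>
       (\<exists>L. (w \<longlongrightarrow> L) (at z1 within ball 0 1))"

definition hard_singularity :: "(complex \<Rightarrow> complex) \<Rightarrow> complex \<Rightarrow> bool" where
  "hard_singularity w z1 \<longleftrightarrow> singular_point w z1 \<and>
       \<not> (\<exists>L. (w \<longlongrightarrow> L) (at z1 within ball 0 1))"

definition borderline_hard_singularity :: "(complex \<Rightarrow> complex) \<Rightarrow> complex \<Rightarrow> bool" where
  "borderline_hard_singularity w z1 \<longleftrightarrow>
     hard_singularity w z1 \<and> soft_singularity (angular_primitive w) z1"

end

theory Submission
  imports Defs
begin

lemma ap_deriv:
  assumes hol: "w holomorphic_on ball 0 1" and z: "z \<in> ball 0 1"
  shows "(angular_primitive w has_field_derivative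
           (- \<i> * (if z = 0 then deriv w 0 else (w z - w 0) / z))) (at z)"
proof -
  define f where "f = (\<lambda>z'. if z' = 0 then deriv w 0 else (w z' - w 0) / z')"
  have fh: "f holomorphic_on ball 0 1"
    proof -
    have "(\<lambda>z. if z = 0 then deriv w 0 else (w z - w 0) / (z - 0)) = f"
      by (auto simp: f_def fun_eq_iff)
    with pole_lemma[OF hol, of 0] show ?thesis by simp
  qed
  have contf: "continuous_on (ball 0 1) f"
    using fh holomorphic_on_imp_continuous_on by blast
  have segs: "\<And>y. y \<in> ball (0::complex) 1 \<Longrightarrow> closed_segment 0 y \<subseteq> ball 0 1"
    by (simp add: closed_segment_subset convex_ball)
  have zer: "contour_integral (linepath 0 b) f + contour_integral (linepath b c) f +
             contour_integral (linepath c 0) f = 0"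
    if "closed_segment b c \<subseteq> ball 0 1" for b c
  proof -
    have "b \<in> ball 0 1" "c \<in> ball 0 1" using that by auto
    then have "convex hull {0, b, c} \<subseteq> ball 0 1"
      by (intro hull_minimal) (auto simp: convex_ball)
    then have "f holomorphic_on convex hull {0, b, c}"
      using fh holomorphic_on_subset by blast
    then show ?thesis
      by (rule has_chain_integral_chain_integral3[OF Cauchy_theorem_triangle])
  qed
  have "((\<lambda>x. contour_integral (linepath 0 x) f) has_field_derivative f z) (at z)"
    by (rule triangle_contour_integrals_starlike_primitive[OF contf _ open_ball z segs zer]) auto
  then have "((\<lambda>x. - \<i> * contour_integral (linepath 0 x) f) has_field_derivative - \<i> * f z) (at z)"
    by (intro DERIV_cmult)
  then show ?thesis
    unfolding angular_primitive_def f_def by simp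
qed

theorem mainTheorem10:
  fixes w :: "complex \<Rightarrow> complex" and z1 :: complex
  assumes "w holomorphic_on ball 0 1"
    and "norm z1 = 1"
    and "borderline_hard_singularity w z1"
  shows "\<forall>\<gamma> :: real \<Rightarrow> complex.
           \<gamma> ` {0..<1} \<subseteq> ball 0 1 \<and>
           (\<forall>s\<in>{0<..<1}. valid_path (subpath 0 s \<gamma>)) \<and>
           (\<gamma> \<longlongrightarrow> z1) (at_left 1)
         \<longrightarrow> (\<exists>L. ((\<lambda>s. contour_integral (subpath 0 s \<gamma>) w) \<longlongrightarrow> L) (at_left 1))"
proof -
  define P where "P = angular_primitive w"
  define B where "B = ball (0::complex) 1"
  obtain LP where LP: "(P \<longlongrightarrow> LP) (at z1 within B)"
    using assms(3) unfolding borderline_hard_singularity_def soft_singularity_def P_def B_def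
    by blast
  have dP: "\<And>z. z \<in> B \<Longrightarrow> (P has_field_derivative
           (- \<i> * (if z = 0 then deriv w 0 else (w z - w 0) / z))) (at z)"
    unfolding P_def B_def using ap_deriv[OF assms(1)] by blast
  have Phol: "P holomorphic_on B"
    using dP unfolding holomorphic_on_def field_differentiable_def
    by (meson has_field_derivative_at_within)
  obtain Q where dQ: "\<And>x. x \<in> B \<Longrightarrow> (Q has_field_derivative P x) (at x within B)"
    using holomorphic_convex_primitive'[OF _ _ Phol] unfolding B_def by auto
  have z1B: "z1 \<notin> B" using assms(2) by (simp add: B_def)
  have "\<forall>\<^sub>F z in at z1 within B. norm (P z) < norm LP + 1"
    using tendsto_norm[OF LP] by (rule order_tendstoD) simp
  then obtain d where d: "d > 0" and dP_bd: "\<And>z. z \<in> B \<Longrightarrow> z \<noteq> z1 \<Longrightarrow> dist z z1 < d \<Longrightarrow> norm (P z) < norm LP + 1"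
    unfolding eventually_at by blast
  define S where "S = B \<inter> ball z1 d"
  have convS: "convex S" unfolding S_def B_def by (intro convex_Int convex_ball)
  have "dist (Q x) (Q y) \<le> (norm LP + 1) * dist x y" if "x \<in> S" "y \<in> S" for x y
  proof -
    have "norm (Q x - Q y) \<le> (norm LP + 1) * norm (x - y)"
    proof (rule field_differentiable_bound[OF convS])
      fix z assume z: "z \<in> S"
      show "(Q has_field_derivative P z) (at z within S)"
        using dQ[of z] z unfolding S_def by (auto intro: has_field_derivative_subset)
      show "norm (P z) \<le> norm LP + 1"
      proof -
        have "z \<noteq> z1" using z z1B unfolding S_def by auto
        then show ?thesis
          using z dP_bd[of z] unfolding S_def by (auto simp: dist_commute)
      qed
    qed (use that in auto)
    then show ?thesis by (simp add: dist_norm)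
  qed
  then have "(norm LP + 1)-lipschitz_on S Q"
    by (intro lipschitz_onI) auto
  then have uc: "uniformly_continuous_on S Q"
    by (rule lipschitz_on_uniformly_continuous)
  have "z1 \<in> ball z1 d \<inter> closure B"
    using d assms(2) by (simp add: B_def)
  then have "z1 \<in> closure S"
    unfolding S_def using open_Int_closure_subset[of "ball z1 d" B] by (auto simp: Int_commute)
  then obtain LQ where LQS: "(Q \<longlongrightarrow> LQ) (at z1 within S)"
    using uniformly_continuous_on_extension_at_closure[OF uc] by blast
  have "at z1 within S = at z1 within B"
    unfolding S_def by (rule at_within_nhd[of _ "ball z1 d"]) (use d in auto)
  with LQS have LQ: "(Q \<longlongrightarrow> LQ) (at z1 within B)" by simp
  define W where "W = (\<lambda>z. w 0 * z + \<i> * z * P z - \<i> * Q z)"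
  have dW: "(W has_field_derivative w z) (at z within B)" if z: "z \<in> B" for z
  proof -
    define D where "D = - \<i> * (if z = 0 then deriv w 0 else (w z - w 0) / z)"
    have P': "(P has_field_derivative D) (at z within B)"
      unfolding D_def by (rule has_field_derivative_at_within[OF dP[OF z]])
    have "(W has_field_derivative (w 0 * 1 + (\<i> * 1 * P z + D * (\<i> * z)) - \<i> * P z)) (at z within B)"
      unfolding W_def
      by (intro DERIV_diff DERIV_add DERIV_cmult DERIV_mult DERIV_ident P' dQ[OF z])
    moreover have "w 0 * 1 + (\<i> * 1 * P z + D * (\<i> * z)) - \<i> * P z = w z"
      unfolding D_def by (cases "z = 0") (auto simp: algebra_simps diff_divide_distrib)
    ultimately show ?thesis by simp
  qed
  have WL: "(W \<longlongrightarrow> w 0 * z1 + \<i> * z1 * LP - \<i> * LQ) (at z1 within B)"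
    unfolding W_def by (intro tendsto_intros LP LQ)
  show ?thesis
  proof (intro allI impI, elim conjE)
    fix \<gamma> :: "real \<Rightarrow> complex"
    assume im: "\<gamma> ` {0..<1} \<subseteq> ball 0 1" and vp: "\<forall>s\<in>{0<..<1}. valid_path (subpath 0 s \<gamma>)"
      and lim: "(\<gamma> \<longlongrightarrow> z1) (at_left 1)"
    have ev: "\<forall>\<^sub>F s in at_left (1::real). s \<in> {0<..<1}"
      by (rule eventually_at_leftI[of 0]) auto
    have eq: "\<forall>\<^sub>F s in at_left (1::real). W (\<gamma> s) - W (\<gamma> 0) = contour_integral (subpath 0 s \<gamma>) w"
      using ev
    proof eventually_elim
      case (elim s)
      have "path_image (subpath 0 s \<gamma>) \<subseteq> B"
        using elim im unfolding B_def by (auto simp: path_image_subpath)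
      from contour_integral_primitive[OF dW vp[rule_format, OF elim] this]
      show ?case by (simp add: contour_integral_unique pathstart_subpath pathfinish_subpath)
    qed
    have "filterlim \<gamma> (at z1 within B) (at_left 1)"
      unfolding filterlim_at
    proof
      show "\<forall>\<^sub>F s in at_left 1. \<gamma> s \<in> B \<and> \<gamma> s \<noteq> z1"
        using ev
      proof eventually_elim
        case (elim s)
        then have "\<gamma> s \<in> B" using im unfolding B_def by (force simp: image_subset_iff)
        then show ?case using z1B by auto
      qed
    qed (rule lim)
    then have "((\<lambda>s. W (\<gamma> s)) \<longlongrightarrow> w 0 * z1 + \<i> * z1 * LP - \<i> * LQ) (at_left 1)"
      by (rule filterlim_compose[OF WL])
    then have "((\<lambda>s. W (\<gamma> s) - W (\<gamma> 0)) \<longlongrightarrow> w 0 * z1 + \<i> * z1 * LP - \<i> * LQ - W (\<gamma> 0)) (at_left 1)"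
      by (intro tendsto_intros)
    then show "\<exists>L. ((\<lambda>s. contour_integral (subpath 0 s \<gamma>) w) \<longlongrightarrow> L) (at_left 1)"
      using Lim_transform_eventually[OF _ eq] by blast
  qed
qed

end
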